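(* Let $E$ be a dense linear subspace of $\omega$ of countably infinite Hamel dimension. Then there exist a Hamel basis $\{v_n\}_{n\in\mathbb{N}}$ of $E$ and a bijection $\alpha:\mathbb{N}\to\mathbb{N}$ such that $\delta_{\alpha(n)}(v_n)=1$ for all $n\in\mathbb{N}$ and $\delta_{\alpha(k)}(v_n)=0$ whenever $n\in\mathbb{N}$ and $k<n$.
   Context: $\omega=\mathbb{K}^{\mathbb{N}}$ with the product topology, $\mathbb{K}\in\{\mathbb{R},\mathbb{C}\}$; $\delta_n$ denotes the $n$-th coordinate functional, $\delta_n(x)=x_n$. *)

theory Defs
  imports "HOL-Analysis.Analysis" "HOL-Library.Function_Algebras"
begin

text \<open>omega = K^N, modelled as the type nat \<Rightarrow> K, which carries the product topology
  (instance in HOL-Analysis.Function_Topology).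
  The n-th coordinate functional delta_n is evaluation x n.\<close>

definition seq_scale :: "'a::field \<Rightarrow> (nat \<Rightarrow> 'a) \<Rightarrow> (nat \<Rightarrow> 'a)" where
  "seq_scale c x = (\<lambda>n. c * x n)"

lemma vector_space_seq_scale: "vector_space (seq_scale :: 'a::field \<Rightarrow> _)"
  by unfold_locales (auto simp: seq_scale_def fun_eq_iff algebra_simps)

end

theory Submission
  imports Defs
begin

lemma sum_fun_app: "(sum f A) (x::'b) = (\<Sum>a\<in>A. f a x)"
  by (induction A rule: infinite_finite_induct) auto

lemma seq_scale_app[simp]: "seq_scale c x i = c * x i"
  by (simp add: seq_scale_def)

lemma interp:
  fixes E :: "(nat \<Rightarrow> 'a::real_normed_field) set"
  assumes sub: "module.subspace seq_scale E" and dense: "closure E = UNIV" and fin: "finite F"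
  shows "\<forall>t. \<exists>e\<in>E. \<forall>i\<in>F. e i = t i"
  using fin
proof (induction F rule: finite_induct)
  interpret vs: vector_space "seq_scale :: 'a \<Rightarrow> _" by (rule vector_space_seq_scale)
  case empty
  then show ?case using vs.subspace_0[OF sub] by auto
next
  interpret vs: vector_space "seq_scale :: 'a \<Rightarrow> _" by (rule vector_space_seq_scale)
  case (insert a F)
  have zex: "\<exists>z\<in>E. (\<forall>i\<in>F. z i = 0) \<and> z a \<noteq> 0"
  proof (rule ccontr)
    assume nz: "\<not> ?thesis"
    have "\<forall>i\<in>F. \<exists>e\<in>E. \<forall>j\<in>F. e j = (if j = i then 1 else 0)"
      using insert.IH by auto
    then obtain u where u: "\<And>i. i\<in>F \<Longrightarrow> u i \<in> E \<and> (\<forall>j\<in>F. u i j = (if j = i then 1 else 0))"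
      by metis
    define f where "f x = x a - (\<Sum>i\<in>F. x i * u i a)" for x :: "nat \<Rightarrow> 'a"
    have cont: "continuous_on UNIV f"
      unfolding f_def by (intro continuous_intros) auto
    have "E \<subseteq> {x. f x = 0}"
    proof
      fix x assume xE: "x \<in> E"
      define y where "y = x - (\<Sum>i\<in>F. seq_scale (x i) (u i))"
      have yE: "y \<in> E" unfolding y_def
        by (intro vs.subspace_diff[OF sub] xE vs.subspace_sum[OF sub] vs.subspace_scale[OF sub]) (use u in auto)
      have yapp: "y j = x j - (\<Sum>i\<in>F. x i * u i j)" for j
        by (simp add: y_def sum_fun_app)
      have "\<forall>j\<in>F. y j = 0"
      proof
        fix j assume j: "j \<in> F"
        have "(\<Sum>i\<in>F. x i * u i j) = (\<Sum>i\<in>F. if i = j then x j else 0)"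
          by (rule sum.cong) (use u j in auto)
        also have "\<dots> = x j" using j insert.hyps by simp
        finally show "y j = 0" by (simp add: yapp)
      qed
      with nz yE have "y a = 0" by auto
      then show "x \<in> {x. f x = 0}" by (simp add: yapp f_def)
    qed
    moreover have "closed {x. f x = 0}"
      by (rule closed_Collect_eq[OF cont]) auto
    ultimately have "closure E \<subseteq> {x. f x = 0}" by (rule closure_minimal)
    hence "f (\<lambda>j. if j = a then 1 else 0) = 0" using dense by auto
    moreover have "f (\<lambda>j. if j = a then 1 else 0) = 1"
      using insert.hyps by (auto simp: f_def intro!: sum.neutral)
    ultimately show False by simp
  qed
  show ?case
  proof
    fix t
    obtain e0 where e0: "e0 \<in> E" "\<forall>i\<in>F. e0 i = t i" using insert.IH by blast
    obtain z where z: "z \<in> E" "\<forall>i\<in>F. z i = 0" "z a \<noteq> 0" using zex by blast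
    define e where "e = e0 + seq_scale ((t a - e0 a) / z a) z"
    have "e \<in> E" unfolding e_def by (intro vs.subspace_add[OF sub] e0 vs.subspace_scale[OF sub] z)
    moreover have "\<forall>i\<in>insert a F. e i = t i"
      using e0 z by (auto simp: e_def)
    ultimately show "\<exists>e\<in>E. \<forall>i\<in>insert a F. e i = t i" by blast
  qed
qed


definition inv_st :: "(nat \<Rightarrow> 'a::field) set \<Rightarrow> nat \<Rightarrow> (nat \<Rightarrow> nat \<Rightarrow> 'a) \<Rightarrow> (nat \<Rightarrow> nat) \<Rightarrow> bool" where
  "inv_st E n V A \<longleftrightarrow> (\<forall>k<n. V k \<in> E \<and> V k (A k) = 1 \<and> (\<forall>j<k. V k (A j) = 0))"

definition good :: "(nat \<Rightarrow> 'a::field) set \<Rightarrow> (nat \<Rightarrow> nat \<Rightarrow> 'a) \<Rightarrow> nat \<Rightarrow> (nat \<Rightarrow> nat \<Rightarrow> 'a) \<Rightarrow> (nat \<Rightarrow> nat)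
   \<Rightarrow> (nat \<Rightarrow> 'a) \<times> nat \<Rightarrow> bool" where
  "good E b n V A p \<longleftrightarrow> fst p \<in> E \<and> fst p (snd p) = 1 \<and> (\<forall>k<n. fst p (A k) = 0)
     \<and> (even n \<longrightarrow> b (n div 2) \<in> module.span seq_scale (V ` {..<n} \<union> {fst p}))
     \<and> (odd n \<longrightarrow> n div 2 \<in> A ` {..<n} \<union> {snd p})"

lemma fresh:
  fixes E :: "(nat \<Rightarrow> 'a::real_normed_field) set"
  assumes sub: "module.subspace seq_scale E" and dense: "closure E = UNIV" and fin: "finite F" and i: "i \<notin> F"
  shows "\<exists>v\<in>E. v i = 1 \<and> (\<forall>j\<in>F. v j = 0)"
proof -
  obtain e where "e \<in> E" "\<forall>j\<in>insert i F. e j = (if j = i then 1 else 0)"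
  proof -
    have "\<exists>e\<in>E. \<forall>j\<in>insert i F. e j = (\<lambda>j. if j = i then 1 else 0) j"
    proof -
      have fi: "finite (insert i F)" using fin by simp
      show ?thesis using interp[OF sub dense fi] by (elim allE[where x="\<lambda>j. if j = i then 1 else 0"]) simp
    qed
    then show ?thesis using that by auto
  qed
  then show ?thesis using i by (intro bexI[of _ e]) auto
qed

lemma reduce:
  fixes E :: "(nat \<Rightarrow> 'a::real_normed_field) set"
  assumes inv: "inv_st E n V A"
  shows "\<exists>y. x - y \<in> module.span seq_scale (V ` {..<n}) \<and> (\<forall>j<n. y (A j) = 0)"
  using inv
proof (induction n)
  interpret vs: vector_space "seq_scale :: 'a \<Rightarrow> _" by (rule vector_space_seq_scale)
  case 0
  then show ?case by (intro exI[of _ x]) (simp only: diff_self vs.span_zero, simp)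
next
  interpret vs: vector_space "seq_scale :: 'a \<Rightarrow> _" by (rule vector_space_seq_scale)
  case (Suc n)
  have invn: "inv_st E n V A" using Suc.prems by (auto simp: inv_st_def)
  obtain y where y: "x - y \<in> module.span seq_scale (V ` {..<n})" "\<forall>j<n. y (A j) = 0"
    using Suc.IH[OF invn] by blast
  have Vn: "V n (A n) = 1" "\<forall>j<n. V n (A j) = 0" using Suc.prems by (auto simp: inv_st_def)
  define y' where "y' = y - seq_scale (y (A n)) (V n)"
  have sp: "module.span seq_scale (V ` {..<n}) \<subseteq> module.span seq_scale (V ` {..<Suc n})"
    by (rule vs.span_mono) auto
  have "x - y' = (x - y) + seq_scale (y (A n)) (V n)" by (simp add: y'_def)
  also have "\<dots> \<in> module.span seq_scale (V ` {..<Suc n})"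
    using y(1) sp by (intro vs.span_add vs.span_scale) (auto intro: vs.span_base)
  finally have "x - y' \<in> module.span seq_scale (V ` {..<Suc n})" .
  moreover have "\<forall>j<Suc n. y' (A j) = 0"
    using y(2) Vn by (auto simp: y'_def less_Suc_eq)
  ultimately show ?case by blast
qed

lemma step:
  fixes E :: "(nat \<Rightarrow> 'a::real_normed_field) set"
  assumes sub: "module.subspace seq_scale E" and dense: "closure E = UNIV" and bE: "range b \<subseteq> E"
    and inv: "inv_st E n V A"
  shows "\<exists>p. good E b n V A p"
proof -
  interpret vs: vector_space "seq_scale :: 'a \<Rightarrow> _" by (rule vector_space_seq_scale)
  have fr: "\<exists>v\<in>E. v i = 1 \<and> (\<forall>k<n. v (A k) = 0)" if "i \<notin> A ` {..<n}" for i
    using fresh[OF sub dense _ that] by auto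
  have anyfresh: "\<exists>i. i \<notin> A ` {..<n}"
    using ex_new_if_finite[OF infinite_UNIV_nat, of "A ` {..<n}"] by auto
  have spE: "module.span seq_scale (V ` {..<n}) \<subseteq> E"
    using inv by (intro vs.span_minimal sub) (auto simp: inv_st_def)
  show ?thesis
  proof (cases "even n")
    case False
    show ?thesis
    proof (cases "n div 2 \<in> A ` {..<n}")
      case True
      obtain i where i: "i \<notin> A ` {..<n}" using anyfresh by blast
      obtain v where "v\<in>E" "v i = 1" "\<forall>k<n. v (A k) = 0" using fr[OF i] by blast
      then show ?thesis using True False by (intro exI[of _ "(v,i)"]) (auto simp: good_def)
    next
      case nT: False
      obtain v where "v\<in>E" "v (n div 2) = 1" "\<forall>k<n. v (A k) = 0" using fr[OF nT] by blast
      then show ?thesis using False by (intro exI[of _ "(v,n div 2)"]) (auto simp: good_def)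
    qed
  next
    case True
    obtain y where y: "b (n div 2) - y \<in> module.span seq_scale (V ` {..<n})" "\<forall>j<n. y (A j) = 0"
      using reduce[OF inv] by blast
    show ?thesis
    proof (cases "y = 0")
      case True
      obtain i where i: "i \<notin> A ` {..<n}" using anyfresh by blast
      obtain v where "v\<in>E" "v i = 1" "\<forall>k<n. v (A k) = 0" using fr[OF i] by blast
      moreover have "b (n div 2) \<in> module.span seq_scale (V ` {..<n} \<union> {v})"
        using y(1) True vs.span_mono[of "V ` {..<n}" "V ` {..<n} \<union> {v}"] by auto
      ultimately show ?thesis using \<open>even n\<close> by (intro exI[of _ "(v,i)"]) (auto simp: good_def)
    next
      case False
      then obtain a where a: "y a \<noteq> 0" by (auto simp: fun_eq_iff)
      define v where "v = seq_scale (1 / y a) y"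
      have yE: "y \<in> E"
      proof -
        have h1: "b (n div 2) \<in> E" "b (n div 2) - y \<in> E" using bE spE y(1) by auto
        from vs.subspace_diff[OF sub h1] show ?thesis by simp
      qed
      have vE: "v \<in> E" unfolding v_def by (rule vs.subspace_scale[OF sub yE])
      have va: "v a = 1" using a by (simp add: v_def)
      have v0: "\<forall>k<n. v (A k) = 0" using y(2) by (simp add: v_def)
      have "b (n div 2) = (b (n div 2) - y) + seq_scale (y a) v"
        using a by (simp add: v_def seq_scale_def fun_eq_iff)
      also have "\<dots> \<in> module.span seq_scale (V ` {..<n} \<union> {v})"
        using y(1) vs.span_mono[of "V ` {..<n}" "V ` {..<n} \<union> {v}"]
        by (intro vs.span_add vs.span_scale) (auto intro: vs.span_base)
      finally show ?thesis using vE va v0 \<open>even n\<close> by (intro exI[of _ "(v,a)"]) (auto simp: good_def)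
    qed
  qed
qed


lemma main:
  fixes E :: "(nat \<Rightarrow> 'a::real_normed_field) set" and b :: "nat \<Rightarrow> nat \<Rightarrow> 'a"
  assumes sub: "module.subspace seq_scale E" and dense: "closure E = UNIV"
    and bE: "range b \<subseteq> E" and bsp: "module.span seq_scale (range b) = E"
  shows "\<exists>(v :: nat \<Rightarrow> nat \<Rightarrow> 'a) (\<alpha> :: nat \<Rightarrow> nat).
            inj v \<and> \<not> module.dependent seq_scale (range v) \<and> module.span seq_scale (range v) = E
            \<and> bij \<alpha> \<and> (\<forall>n. v n (\<alpha> n) = 1) \<and> (\<forall>n k. k < n \<longrightarrow> v n (\<alpha> k) = 0)"
proof -
  interpret vs: vector_space "seq_scale :: 'a \<Rightarrow> _" by (rule vector_space_seq_scale)
  define ch where "ch n V A = (SOME p. good E b n V A p)" for n V A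
  define st where "st = rec_nat ((\<lambda>_. 0), (\<lambda>_. 0))
     (\<lambda>n s. ((fst s) (n := fst (ch n (fst s) (snd s))), (snd s) (n := snd (ch n (fst s) (snd s)))))"
  have st0: "st 0 = ((\<lambda>_. 0), (\<lambda>_. 0))" by (simp add: st_def)
  have stS: "st (Suc n) = ((fst (st n)) (n := fst (ch n (fst (st n)) (snd (st n)))),
                           (snd (st n)) (n := snd (ch n (fst (st n)) (snd (st n)))))" for n
    by (simp add: st_def)
  define v where "v k = fst (st (Suc k)) k" for k
  define \<alpha> where "\<alpha> k = snd (st (Suc k)) k" for k
  have stable: "k < n \<Longrightarrow> fst (st n) k = v k \<and> snd (st n) k = \<alpha> k" for k n
  proof (induction n)
    case 0 then show ?case by simp
  next
    case (Suc n)
    show ?case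
    proof (cases "k = n")
      case True then show ?thesis by (simp add: v_def \<alpha>_def)
    next
      case False then show ?thesis using Suc by (simp add: stS)
    qed
  qed
  have invs: "inv_st E n (fst (st n)) (snd (st n))" for n
  proof (induction n)
    case 0 then show ?case by (simp add: inv_st_def)
  next
    case (Suc n)
    have g: "good E b n (fst (st n)) (snd (st n)) (ch n (fst (st n)) (snd (st n)))"
      unfolding ch_def by (rule someI_ex, rule step[OF sub dense bE Suc])
    show ?case
      using Suc g unfolding inv_st_def good_def by (auto simp: stS less_Suc_eq)
  qed
  have goodn: "good E b n v \<alpha> (v n, \<alpha> n)" for n
  proof -
    have g: "good E b n (fst (st n)) (snd (st n)) (ch n (fst (st n)) (snd (st n)))"
      unfolding ch_def by (rule someI_ex, rule step[OF sub dense bE invs])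
    have e: "ch n (fst (st n)) (snd (st n)) = (v n, \<alpha> n)"
      by (simp add: v_def \<alpha>_def stS)
    have i1: "fst (st n) ` {..<n} = v ` {..<n}" using stable by (auto simp: image_def)
    have i2: "snd (st n) ` {..<n} = \<alpha> ` {..<n}" using stable by (auto simp: image_def)
    show ?thesis using g stable unfolding e good_def i1 i2 by auto
  qed
  have vE: "v n \<in> E" for n using goodn[of n] by (simp add: good_def)
  have v1: "v n (\<alpha> n) = 1" for n using goodn[of n] by (simp add: good_def)
  have v0: "k < n \<Longrightarrow> v n (\<alpha> k) = 0" for n k using goodn[of n] by (simp add: good_def)
  have injv: "inj v"
  proof (rule injI)
    fix n m assume "v n = v m"
    then show "n = m" using v1 v0 by (metis linorder_neqE_nat zero_neq_one)
  qed
  have inja: "inj \<alpha>"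
  proof (rule injI)
    fix n m assume "\<alpha> n = \<alpha> m"
    then show "n = m" using v1 v0 by (metis linorder_neqE_nat zero_neq_one)
  qed
  have sura: "surj \<alpha>"
  proof -
    have "m \<in> range \<alpha>" for m
      using goodn[of "2*m+1"] by (auto simp: good_def)
    then show ?thesis by auto
  qed
  have spv: "module.span seq_scale (range v) = E"
  proof
    show "module.span seq_scale (range v) \<subseteq> E"
      using vE by (intro vs.span_minimal sub) auto
    have "range b \<subseteq> module.span seq_scale (range v)"
    proof
      fix x assume "x \<in> range b"
      then obtain m where x: "x = b m" by auto
      have "b m \<in> module.span seq_scale (v ` {..<2*m} \<union> {v (2*m)})"
        using goodn[of "2*m"] by (simp add: good_def)
      moreover have "module.span seq_scale (v ` {..<2*m} \<union> {v (2*m)}) \<subseteq> module.span seq_scale (range v)"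
        by (rule vs.span_mono) auto
      ultimately show "x \<in> module.span seq_scale (range v)" using x by auto
    qed
    then have "module.span seq_scale (range b) \<subseteq> module.span seq_scale (range v)"
      by (intro vs.span_minimal) auto
    then show "E \<subseteq> module.span seq_scale (range v)" using bsp by simp
  qed
  have indep: "\<not> module.dependent seq_scale (range v)"
  proof
    assume "module.dependent seq_scale (range v)"
    then obtain t u where t: "finite t" "t \<subseteq> range v" "(\<Sum>w\<in>t. seq_scale (u w) w) = 0"
      and nz: "\<exists>w\<in>t. u w \<noteq> 0"
      unfolding vs.dependent_explicit by blast
    define N where "N = {n. v n \<in> t \<and> u (v n) \<noteq> 0}"
    have finN: "finite N"
    proof -
      have "N \<subseteq> inv v ` t" unfolding N_def using injv by (force simp: image_def inv_f_f)
      then show ?thesis using t(1) finite_subset by blast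
    qed
    have neN: "N \<noteq> {}" using nz t(2) unfolding N_def by auto
    define n0 where "n0 = Min N"
    have n0N: "n0 \<in> N" using finN neN by (simp add: n0_def)
    have "(\<Sum>w\<in>t. u w * w (\<alpha> n0)) = 0"
      using fun_cong[OF t(3), of "\<alpha> n0"] by (simp add: sum_fun_app)
    moreover have "(\<Sum>w\<in>t. u w * w (\<alpha> n0)) = (\<Sum>w\<in>t. if w = v n0 then u (v n0) else 0)"
    proof (rule sum.cong)
      fix w assume w: "w \<in> t"
      then obtain n where n: "w = v n" using t(2) by auto
      show "u w * w (\<alpha> n0) = (if w = v n0 then u (v n0) else 0)"
      proof (cases "n = n0")
        case True then show ?thesis using n v1 by simp
      next
        case False
        have "w \<noteq> v n0" using False n injv by (auto dest: injD)
        moreover have "u w * w (\<alpha> n0) = 0"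
        proof (cases "n < n0")
          case True
          then have "n \<notin> N" using finN n0_def by (metis Min_le not_le)
          then have "u w = 0" using w n unfolding N_def by auto
          then show ?thesis by simp
        next
          case False
          then have "n0 < n" using \<open>n \<noteq> n0\<close> by simp
          then show ?thesis using v0 n by simp
        qed
        ultimately show ?thesis by simp
      qed
    qed simp
    moreover have "(\<Sum>w\<in>t. if w = v n0 then u (v n0) else 0) = u (v n0)"
      using n0N t(1) unfolding N_def by simp
    ultimately show False using n0N unfolding N_def by simp
  qed
  show ?thesis
    using injv indep spv inja sura v1 v0 by (intro exI[of _ v] exI[of _ \<alpha>]) (auto simp: bij_def)
qed


lemma gen: "\<And>E :: (nat \<Rightarrow> 'a::real_normed_field) set. module.subspace seq_scale E \<and> closure E = UNIV \<and>
    (\<exists>B. B \<subseteq> E \<and> \<not> module.dependent seq_scale B \<and> module.span seq_scale B = E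
         \<and> countable B \<and> infinite B)
    \<Longrightarrow> (\<exists>(v :: nat \<Rightarrow> nat \<Rightarrow> 'a) (\<alpha> :: nat \<Rightarrow> nat).
          inj v \<and> \<not> module.dependent seq_scale (range v) \<and> module.span seq_scale (range v) = E
          \<and> bij \<alpha> \<and> (\<forall>n. v n (\<alpha> n) = 1) \<and> (\<forall>n k. k < n \<longrightarrow> v n (\<alpha> k) = 0))"
proof -
  fix E :: "(nat \<Rightarrow> 'a::real_normed_field) set"
  assume h: "module.subspace seq_scale E \<and> closure E = UNIV \<and>
    (\<exists>B. B \<subseteq> E \<and> \<not> module.dependent seq_scale B \<and> module.span seq_scale B = E
         \<and> countable B \<and> infinite B)"
  then obtain B where B: "B \<subseteq> E" "module.span seq_scale B = E" "countable B" "infinite B" by blast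
  have ne: "B \<noteq> {}" using B(4) by auto
  have r: "range (from_nat_into B) = B" using range_from_nat_into[OF ne B(3)] .
  show "?thesis E"
    by (rule main) (use h B r in auto)
qed

theorem lemma3p5:
  shows
  "(\<forall>E :: (nat \<Rightarrow> real) set.
      module.subspace seq_scale E \<and> closure E = UNIV \<and>
      (\<exists>B. B \<subseteq> E \<and> \<not> module.dependent seq_scale B \<and> module.span seq_scale B = E
           \<and> countable B \<and> infinite B)
      \<longrightarrow> (\<exists>(v :: nat \<Rightarrow> nat \<Rightarrow> real) (\<alpha> :: nat \<Rightarrow> nat).
            inj v \<and> \<not> module.dependent seq_scale (range v) \<and> module.span seq_scale (range v) = E
            \<and> bij \<alpha> \<and> (\<forall>n. v n (\<alpha> n) = 1) \<and> (\<forall>n k. k < n \<longrightarrow> v n (\<alpha> k) = 0)))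
 \<and> (\<forall>E :: (nat \<Rightarrow> complex) set.
      module.subspace seq_scale E \<and> closure E = UNIV \<and>
      (\<exists>B. B \<subseteq> E \<and> \<not> module.dependent seq_scale B \<and> module.span seq_scale B = E
           \<and> countable B \<and> infinite B)
      \<longrightarrow> (\<exists>(v :: nat \<Rightarrow> nat \<Rightarrow> complex) (\<alpha> :: nat \<Rightarrow> nat).
            inj v \<and> \<not> module.dependent seq_scale (range v) \<and> module.span seq_scale (range v) = E
            \<and> bij \<alpha> \<and> (\<forall>n. v n (\<alpha> n) = 1) \<and> (\<forall>n k. k < n \<longrightarrow> v n (\<alpha> k) = 0)))"
using gen[where 'a=real] gen[where 'a=complex] by blast

end
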